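(* Let $a\ge b\ge1$ be integers with either $b\ge2$, or $b=1$ and $a\ge5$, and $A=\begin{pmatrix}2&-a\\-b&2\end{pmatrix}$. Then: (1) for $i=1,2$ and $j,k\in\mathbb Z_+$, $\gamma=\beta_i^k+\beta_i^j$ satisfies $(\gamma,\gamma)>0$; moreover (a) if $b\ge2$, then $\beta_i^k+\beta_i^j$ is never a root; (b) if $b=1$ and $a\ge5$, then $\beta_1^{2k+1}+\beta_1^{2k+3}$ and $\beta_2^{2k}+\beta_2^{2k+2}$ ($k\in\mathbb Z_+$) are real roots, and these are the only pairs of roots of the same type ($\beta_1^\cdot,\beta_1^\cdot$ or $\beta_2^\cdot,\beta_2^\cdot$) whose sum is a real root; (2) for all $j,k\in\mathbb Z_+$, $\gamma=\beta_1^k+\beta_2^j$ is a root, and $(\gamma,\gamma)\le0$ unless $b=1$ and $(k,j)=(0,0)$.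
   Context: Let $\mathfrak g(A)$ be the Kac–Moody algebra with simple roots $\alpha_1,\alpha_2$, root system $\Delta$, invariant form $(\alpha_1,\alpha_1)=2$, $(\alpha_2,\alpha_2)=2a/b$, $(\alpha_1,\alpha_2)=-a$; a root $\alpha$ is real iff $(\alpha,\alpha)>0$. $\mathbb Z_+=\{0,1,2,\dots\}$. Define $c_0=d_0=0$, $c_1=d_1=1$, $c_{k+2}+c_k=a d_{k+1}$, $d_{k+2}+d_k=b c_{k+1}$, and $\beta_1^j=c_j\alpha_1+d_{j+1}\alpha_2$, $\beta_2^j=c_{j+1}\alpha_1+d_j\alpha_2$ (the positive real roots). *)

theory Defs
  imports Complex_Main
begin

text \<open>Elements of the root lattice are written as pairs (m,n) meaning m*alpha1 + n*alpha2.\<close>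

type_synonym lat = "int \<times> int"

definition ip :: "int \<Rightarrow> int \<Rightarrow> lat \<Rightarrow> lat \<Rightarrow> real" where
  "ip a b x y = 2 * of_int (fst x) * of_int (fst y)
     + (2 * of_int a / of_int b) * of_int (snd x) * of_int (snd y)
     - of_int a * (of_int (fst x) * of_int (snd y) + of_int (snd x) * of_int (fst y))"

definition ladd :: "lat \<Rightarrow> lat \<Rightarrow> lat" where
  "ladd x y = (fst x + fst y, snd x + snd y)"

text \<open>Simple reflections from the Cartan matrix A = [[2,-a],[-b,2]]:
  s_i(lambda) = lambda - <lambda, alpha_i^vee> alpha_i.\<close>
definition refl1 :: "int \<Rightarrow> int \<Rightarrow> lat \<Rightarrow> lat" where
  "refl1 a b v = (a * snd v - fst v, snd v)"
definition refl2 :: "int \<Rightarrow> int \<Rightarrow> lat \<Rightarrow> lat" where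
  "refl2 a b v = (fst v, b * fst v - snd v)"

inductive_set weyl_orbit :: "int \<Rightarrow> int \<Rightarrow> lat set \<Rightarrow> lat set" for a b S where
  base: "v \<in> S \<Longrightarrow> v \<in> weyl_orbit a b S"
| r1: "v \<in> weyl_orbit a b S \<Longrightarrow> refl1 a b v \<in> weyl_orbit a b S"
| r2: "v \<in> weyl_orbit a b S \<Longrightarrow> refl2 a b v \<in> weyl_orbit a b S"

definition real_roots :: "int \<Rightarrow> int \<Rightarrow> lat set" where
  "real_roots a b = weyl_orbit a b {(1,0),(0,1)}"

text \<open>Kac's fundamental set K: nonzero nonnegative elements with connected support
  (the Dynkin diagram has an edge iff a \<noteq> 0) and nonpositive pairing with all simple roots.\<close>
definition Kset :: "int \<Rightarrow> int \<Rightarrow> lat set" where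
  "Kset a b = {v. fst v \<ge> 0 \<and> snd v \<ge> 0 \<and> v \<noteq> (0,0)
      \<and> (fst v = 0 \<or> snd v = 0 \<or> a \<noteq> 0)
      \<and> ip a b v (1,0) \<le> 0 \<and> ip a b v (0,1) \<le> 0}"

definition pos_imag_roots :: "int \<Rightarrow> int \<Rightarrow> lat set" where
  "pos_imag_roots a b = weyl_orbit a b (Kset a b)"

definition roots :: "int \<Rightarrow> int \<Rightarrow> lat set" where
  "roots a b = real_roots a b \<union> pos_imag_roots a b
      \<union> (\<lambda>v. (- fst v, - snd v)) ` pos_imag_roots a b"

fun cd :: "int \<Rightarrow> int \<Rightarrow> nat \<Rightarrow> int \<times> int" where
  "cd a b 0 = (0, 0)"
| "cd a b (Suc 0) = (1, 1)"
| "cd a b (Suc (Suc k)) =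
     (a * snd (cd a b (Suc k)) - fst (cd a b k), b * fst (cd a b (Suc k)) - snd (cd a b k))"

definition cseq :: "int \<Rightarrow> int \<Rightarrow> nat \<Rightarrow> int" where "cseq a b k = fst (cd a b k)"
definition dseq :: "int \<Rightarrow> int \<Rightarrow> nat \<Rightarrow> int" where "dseq a b k = snd (cd a b k)"

definition beta1 :: "int \<Rightarrow> int \<Rightarrow> nat \<Rightarrow> lat" where
  "beta1 a b j = (cseq a b j, dseq a b (j + 1))"
definition beta2 :: "int \<Rightarrow> int \<Rightarrow> nat \<Rightarrow> lat" where
  "beta2 a b j = (cseq a b (j + 1), dseq a b j)"

definition beta :: "int \<Rightarrow> int \<Rightarrow> nat \<Rightarrow> nat \<Rightarrow> lat" where
  "beta a b i j = (if i = 1 then beta1 a b j else beta2 a b j)"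

end

theory Submission
  imports Defs
begin


lemma c0[simp]: "cseq a b 0 = 0" by (simp add: cseq_def)
lemma d0[simp]: "dseq a b 0 = 0" by (simp add: dseq_def)
lemma c1[simp]: "cseq a b (Suc 0) = 1" by (simp add: cseq_def)
lemma d1[simp]: "dseq a b (Suc 0) = 1" by (simp add: dseq_def)
lemma cS[simp]: "cseq a b (Suc (Suc n)) = a * dseq a b (Suc n) - cseq a b n"
  by (simp add: cseq_def dseq_def)
lemma dS[simp]: "dseq a b (Suc (Suc n)) = b * cseq a b (Suc n) - dseq a b n"
  by (simp add: cseq_def dseq_def)

lemma seqJ:
  assumes "a \<ge> 1" "b \<ge> 1" "a*b \<ge> 4"
  shows "0 \<le> cseq a b n \<and> 0 \<le> dseq a b n \<and> 0 \<le> cseq a b (Suc n) \<and> 0 \<le> dseq a b (Suc n)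
    \<and> 2*dseq a b n \<le> b*cseq a b (Suc n) \<and> 2*cseq a b n \<le> a*dseq a b (Suc n)"
proof (induction n)
  case 0 show ?case using assms by simp
next
  case (Suc n)
  define x0 where "x0 = cseq a b n"
  define x1 where "x1 = cseq a b (Suc n)"
  define y0 where "y0 = dseq a b n"
  define y1 where "y1 = dseq a b (Suc n)"
  have IH: "0 \<le> x0" "0 \<le> y0" "0 \<le> x1" "0 \<le> y1" "2*y0 \<le> b*x1" "2*x0 \<le> a*y1"
    using Suc unfolding x0_def x1_def y0_def y1_def by auto
  have e1: "2*b*x0 \<le> a*b*y1" using mult_left_mono[OF IH(6), of b] assms by (simp add: algebra_simps)
  have e2: "2*a*y0 \<le> a*b*x1" using mult_left_mono[OF IH(5), of a] assms by (simp add: algebra_simps)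
  have e3: "0 \<le> (a*b-4)*y1" using IH assms by simp
  have e4: "0 \<le> (a*b-4)*x1" using IH assms by simp
  have g1: "2*y1 \<le> b*(a*y1 - x0)" using e1 e3 by (simp add: algebra_simps)
  have g2: "2*x1 \<le> a*(b*x1 - y0)" using e2 e4 by (simp add: algebra_simps)
  show ?case using IH g1 g2 unfolding x0_def x1_def y0_def y1_def by simp
qed

locale ab = fixes a b :: int assumes a1: "a \<ge> 1" and b1: "b \<ge> 1" and ab4: "a*b \<ge> 4"
begin
abbreviation "c \<equiv> cseq a b"
abbreviation "d \<equiv> dseq a b"
lemma J: "0 \<le> c n \<and> 0 \<le> d n \<and> 0 \<le> c (Suc n) \<and> 0 \<le> d (Suc n)
    \<and> 2*d n \<le> b*c (Suc n) \<and> 2*c n \<le> a*d (Suc n)"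
  using seqJ[OF a1 b1 ab4] by blast
lemma cnn: "0 \<le> c n" using J by blast
lemma dnn: "0 \<le> d n" using J by blast
lemma cstep: "c n \<le> c (Suc (Suc n))" using J[of n] by simp
lemma dstep: "d n \<le> d (Suc (Suc n))" using J[of n] by simp
lemma P1: "b * c n \<le> 2 * d (Suc n)"
proof (cases n)
  case 0 then show ?thesis by simp
next
  case (Suc m) then show ?thesis using J[of m] by simp
qed
lemma P2: "a * d n \<le> 2 * c (Suc n)"
proof (cases n)
  case 0 then show ?thesis by simp
next
  case (Suc m) then show ?thesis using J[of m] by simp
qed
lemma cid: "c (Suc (Suc (Suc (Suc n)))) + c n = (a*b-2) * c (Suc (Suc n))"
proof -
  have "a * d (Suc n) = c (Suc (Suc n)) + c n" by simp
  then show ?thesis by (simp add: algebra_simps)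
qed
lemma did: "d (Suc (Suc (Suc (Suc n)))) + d n = (a*b-2) * d (Suc (Suc n))"
proof -
  have "b * c (Suc n) = d (Suc (Suc n)) + d n" by simp
  then show ?thesis by (simp add: algebra_simps)
qed
lemma emono: "c (Suc (Suc m)) - c m \<le> c (Suc (Suc (Suc (Suc m)))) - c (Suc (Suc m))"
proof -
  have h: "0 \<le> c (Suc (Suc m))" by (rule cnn)
  have "0 \<le> (a*b-4) * c (Suc (Suc m))" by (rule mult_nonneg_nonneg) (use ab4 h in linarith)+
  then show ?thesis using cid[of m] by (simp add: algebra_simps)
qed
lemma fmono: "d (Suc (Suc m)) - d m \<le> d (Suc (Suc (Suc (Suc m)))) - d (Suc (Suc m))"
proof -
  have h: "0 \<le> d (Suc (Suc m))" by (rule dnn)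
  have "0 \<le> (a*b-4) * d (Suc (Suc m))" by (rule mult_nonneg_nonneg) (use ab4 h in linarith)+
  then show ?thesis using did[of m] by (simp add: algebra_simps)
qed
end

lemma step2_mono:
  fixes f :: "nat \<Rightarrow> int"
  assumes "\<And>m. f m \<le> f (Suc (Suc m))"
  shows "f p \<le> f (p + 2*t)"
proof (induction t)
  case 0 then show ?case by simp
next
  case (Suc t)
  have "f (p + 2*t) \<le> f (Suc (Suc (p + 2*t)))" by (rule assms)
  then show ?case using Suc by simp
qed

context ab begin
lemma cpos: "1 \<le> c (Suc n)"
proof -
  have "\<exists>t. Suc n = 1 + 2*t \<or> Suc n = 2 + 2*t" by presburger
  then obtain t where t: "Suc n = 1 + 2*t \<or> Suc n = 2 + 2*t" by blast
  have m: "\<And>m. c m \<le> c (Suc (Suc m))" by (rule cstep)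
  show ?thesis using t step2_mono[of c, OF m, of 1 t] step2_mono[of c, OF m, of 2 t] a1
    by (auto simp: numeral_2_eq_2)
qed
lemma dpos: "1 \<le> d (Suc n)"
proof -
  have "\<exists>t. Suc n = 1 + 2*t \<or> Suc n = 2 + 2*t" by presburger
  then obtain t where t: "Suc n = 1 + 2*t \<or> Suc n = 2 + 2*t" by blast
  have m: "\<And>m. d m \<le> d (Suc (Suc m))" by (rule dstep)
  show ?thesis using t step2_mono[of d, OF m, of 1 t] step2_mono[of d, OF m, of 2 t] b1
    by (auto simp: numeral_2_eq_2)
qed
lemma e_ge: "c (Suc (Suc p)) - c p \<le> c (Suc (Suc (p+2*t))) - c (p+2*t)"
  using step2_mono[of "\<lambda>m. c (Suc (Suc m)) - c m", OF emono] by simp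
lemma f_ge: "d (Suc (Suc p)) - d p \<le> d (Suc (Suc (p+2*t))) - d (p+2*t)"
  using step2_mono[of "\<lambda>m. d (Suc (Suc m)) - d m", OF fmono] by simp
end



definition qf :: "int \<Rightarrow> int \<Rightarrow> lat \<Rightarrow> int" where
  "qf a b v = b*(fst v)^2 + a*(snd v)^2 - a*b*fst v*snd v"

lemma qf_refl1[simp]: "qf a b (refl1 a b v) = qf a b v"
  by (simp add: qf_def refl1_def power2_eq_square algebra_simps)
lemma qf_refl2[simp]: "qf a b (refl2 a b v) = qf a b v"
  by (simp add: qf_def refl2_def power2_eq_square algebra_simps)
lemma refl1_inv[simp]: "refl1 a b (refl1 a b v) = v" by (simp add: refl1_def)
lemma refl2_inv[simp]: "refl2 a b (refl2 a b v) = v" by (simp add: refl2_def)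
lemma refl1_ladd: "refl1 a b (ladd u v) = ladd (refl1 a b u) (refl1 a b v)"
  by (simp add: refl1_def ladd_def algebra_simps)
lemma refl2_ladd: "refl2 a b (ladd u v) = ladd (refl2 a b u) (refl2 a b v)"
  by (simp add: refl2_def ladd_def algebra_simps)
lemma ladd_comm: "ladd u v = ladd v u" by (simp add: ladd_def add.commute)

lemma ip_qf: "b > 0 \<Longrightarrow> ip a b v v = 2 * of_int (qf a b v) / of_int b"
  by (simp add: ip_def qf_def field_simps power2_eq_square)

lemma qf_ladd: "qf a b (ladd u v) = qf a b u + qf a b v
   + (2*b*fst u*fst v + 2*a*snd u*snd v - a*b*(fst u*snd v + snd u*fst v))"
  by (simp add: qf_def ladd_def power2_eq_square algebra_simps)

lemma r2b2: "refl2 a b (beta2 a b n) = beta1 a b (Suc n)"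
  by (simp add: refl2_def beta1_def beta2_def)
lemma r1b1: "refl1 a b (beta1 a b n) = beta2 a b (Suc n)"
  by (simp add: refl1_def beta1_def beta2_def)
lemma r2b1: "refl2 a b (beta1 a b (Suc n)) = beta2 a b n"
  by (metis r2b2 refl2_inv)
lemma r1b2: "refl1 a b (beta2 a b (Suc n)) = beta1 a b n"
  by (metis r1b1 refl1_inv)

lemma qf_beta: "qf a b (beta1 a b n) = (if even n then a else b) \<and> qf a b (beta2 a b n) = (if even n then b else a)"
proof (induction n)
  case 0 show ?case by (simp add: qf_def beta1_def beta2_def)
next
  case (Suc n)
  have "qf a b (beta1 a b (Suc n)) = qf a b (beta2 a b n)" by (metis r2b2 qf_refl2)
  moreover have "qf a b (beta2 a b (Suc n)) = qf a b (beta1 a b n)" by (metis r1b1 qf_refl1)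
  ultimately show ?case using Suc by simp
qed

lemma orb1: "refl1 a b v \<in> weyl_orbit a b S \<longleftrightarrow> v \<in> weyl_orbit a b S"
  by (metis refl1_inv weyl_orbit.r1)
lemma orb2: "refl2 a b v \<in> weyl_orbit a b S \<longleftrightarrow> v \<in> weyl_orbit a b S"
  by (metis refl2_inv weyl_orbit.r2)

lemma rr_char:
  assumes "v \<in> real_roots a b"
  shows "(b dvd snd v \<and> qf a b v = b) \<or> (a dvd fst v \<and> qf a b v = a)"
  using assms unfolding real_roots_def
proof (induction rule: weyl_orbit.induct)
  case (base v) then show ?case by (auto simp: qf_def)
next
  case (r1 v)
  have "snd (refl1 a b v) = snd v" "fst (refl1 a b v) = a * snd v - fst v" by (simp_all add: refl1_def)
  moreover have "a dvd fst v \<longleftrightarrow> a dvd a * snd v - fst v"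
    using dvd_add_times_triv_left_iff[of a "snd v" "- fst v"] by (simp add: algebra_simps)
  ultimately show ?case using r1 by auto
next
  case (r2 v)
  have "fst (refl2 a b v) = fst v" "snd (refl2 a b v) = b * fst v - snd v" by (simp_all add: refl2_def)
  moreover have "b dvd snd v \<longleftrightarrow> b dvd b * fst v - snd v"
    using dvd_add_times_triv_left_iff[of b "fst v" "- snd v"] by (simp add: algebra_simps)
  ultimately show ?case using r2 by auto
qed

lemma K_nonpos:
  assumes "a \<ge> 1" "b \<ge> 1" "v \<in> Kset a b"
  shows "qf a b v \<le> 0"
proof -
  obtain x y where v: "v = (x,y)" by force
  have h: "x \<ge> 0" "y \<ge> 0" "ip a b v (1,0) \<le> 0" "ip a b v (0,1) \<le> 0"
    using assms v by (auto simp: Kset_def)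
  have e: "ip a b v v = of_int x * ip a b v (1,0) + of_int y * ip a b v (0,1)"
    by (simp add: ip_def v algebra_simps)
  have "of_int x * ip a b v (1,0) \<le> 0" using h by (simp add: mult_nonneg_nonpos)
  moreover have "of_int y * ip a b v (0,1) \<le> 0" using h by (simp add: mult_nonneg_nonpos)
  ultimately have "ip a b v v \<le> 0" using e by linarith
  then have "2 * real_of_int (qf a b v) / real_of_int b \<le> 0" using ip_qf[of b a v] assms by simp
  then show ?thesis using assms by (simp add: divide_le_0_iff)
qed

lemma pi_nonpos:
  assumes "a \<ge> 1" "b \<ge> 1" "v \<in> pos_imag_roots a b"
  shows "qf a b v \<le> 0"
  using assms(3) unfolding pos_imag_roots_def
  by (induction rule: weyl_orbit.induct) (use K_nonpos[OF assms(1,2)] in auto)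



lemma qf_pos_neg1:
  assumes "a \<ge> 1" "b \<ge> 1" "x < 0" "y \<ge> 0"
  shows "qf a b (x,y) > 0"
proof -
  have "b*x^2 > 0" using assms by simp
  moreover have "a*y^2 \<ge> 0" using assms by simp
  moreover have "0 \<le> (a*b)*(-x)*y" by (intro mult_nonneg_nonneg) (use assms in auto)
  ultimately show ?thesis by (simp add: qf_def algebra_simps)
qed

lemma qf_pos_neg2:
  assumes "a \<ge> 1" "b \<ge> 1" "x \<ge> 0" "y < 0"
  shows "qf a b (x,y) > 0"
proof -
  have "a*y^2 > 0" using assms by simp
  moreover have "b*x^2 \<ge> 0" using assms by simp
  moreover have "0 \<le> (a*b)*x*(-y)" by (intro mult_nonneg_nonneg) (use assms in auto)
  ultimately show ?thesis by (simp add: qf_def algebra_simps)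
qed

lemma inK:
  assumes "a \<ge> 1" "b \<ge> 1" "x \<ge> 0" "y \<ge> 0" "(x,y) \<noteq> (0,0)" "2*x \<le> a*y" "2*y \<le> b*x"
  shows "(x,y) \<in> Kset a b"
proof -
  have i1: "ip a b (x,y) (1,0) = of_int (2*x - a*y)" by (simp add: ip_def)
  have i2: "ip a b (x,y) (0,1) = of_int (a*(2*y - b*x)) / of_int b"
    using assms by (simp add: ip_def field_simps)
  have "a*(2*y - b*x) \<le> 0" using assms by (simp add: mult_nonneg_nonpos)
  then have h1: "real_of_int (a*(2*y - b*x)) \<le> 0" by (simp only: of_int_le_0_iff)
  have h2: "real_of_int b > 0" using assms by simp
  have "ip a b (x,y) (0,1) \<le> 0" using i2 divide_nonpos_pos[OF h1 h2] by linarith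
  moreover have "real_of_int (2*x - a*y) \<le> 0" using assms by (simp only: of_int_le_0_iff)
  then have "ip a b (x,y) (1,0) \<le> 0" using i1 by linarith
  ultimately show ?thesis using assms by (simp add: Kset_def)
qed

lemma descent:
  assumes a1: "a \<ge> 1" and b1: "b \<ge> 1"
  shows "\<forall>x y. nat (x + y) = N \<longrightarrow> 0 \<le> x \<longrightarrow> 0 \<le> y \<longrightarrow> (x,y) \<noteq> (0,0) \<longrightarrow> qf a b (x,y) \<le> 0
     \<longrightarrow> (x,y) \<in> pos_imag_roots a b"
proof (induction N rule: less_induct)
  case (less N)
  show ?case
  proof (intro allI impI)
    fix x y assume N: "nat (x + y) = N" and x0: "0 \<le> x" and y0: "0 \<le> y" and nz: "(x,y) \<noteq> (0,0)"
      and q: "qf a b (x,y) \<le> 0"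
    consider (K) "2*x \<le> a*y \<and> 2*y \<le> b*x" | (A) "2*x > a*y" | (B) "2*y > b*x" by linarith
    then show "(x,y) \<in> pos_imag_roots a b"
    proof cases
      case K
      then show ?thesis using inK[OF a1 b1 x0 y0 nz] unfolding pos_imag_roots_def
        by (auto intro: weyl_orbit.base)
    next
      case A
      define x' where "x' = a*y - x"
      have r: "refl1 a b (x,y) = (x', y)" by (simp add: refl1_def x'_def)
      have q': "qf a b (x',y) \<le> 0" using q r qf_refl1[of a b "(x,y)"] by simp
      have x'0: "0 \<le> x'"
      proof (rule ccontr)
        assume "\<not> 0 \<le> x'"
        then show False using qf_pos_neg1[OF a1 b1, of x' y] y0 q' by simp
      qed
      have "x' + y < x + y" using A unfolding x'_def by linarith
      then have lt: "nat (x' + y) < N" using N x'0 y0 by (simp add: zless_nat_conj)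
      have nz': "(x',y) \<noteq> (0,0)" using nz x'_def by auto
      have "(x',y) \<in> pos_imag_roots a b" by (rule less[OF lt, rule_format, OF refl x'0 y0 nz' q'])
      then show ?thesis using r orb1[of a b "(x,y)" "Kset a b"] unfolding pos_imag_roots_def by simp
    next
      case B
      define y' where "y' = b*x - y"
      have r: "refl2 a b (x,y) = (x, y')" by (simp add: refl2_def y'_def)
      have q': "qf a b (x,y') \<le> 0" using q r qf_refl2[of a b "(x,y)"] by simp
      have y'0: "0 \<le> y'"
      proof (rule ccontr)
        assume "\<not> 0 \<le> y'"
        then show False using qf_pos_neg2[OF a1 b1, of x y'] x0 q' by simp
      qed
      have "x + y' < x + y" using B unfolding y'_def by linarith
      then have lt: "nat (x + y') < N" using N x0 y'0 by (simp add: zless_nat_conj)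
      have nz': "(x,y') \<noteq> (0,0)" using nz y'_def by auto
      have "(x,y') \<in> pos_imag_roots a b" by (rule less[OF lt, rule_format, OF refl x0 y'0 nz' q'])
      then show ?thesis using r orb2[of a b "(x,y)" "Kset a b"] unfolding pos_imag_roots_def by simp
    qed
  qed
qed

lemma descent':
  assumes "a \<ge> 1" "b \<ge> 1" "0 \<le> fst v" "0 \<le> snd v" "v \<noteq> (0,0)" "qf a b v \<le> 0"
  shows "v \<in> pos_imag_roots a b"
proof -
  have "(fst v, snd v) \<in> pos_imag_roots a b"
    using assms(3-6) by (intro descent[OF assms(1,2), rule_format, OF refl]) auto
  then show ?thesis by simp
qed



definition T1 :: "nat \<Rightarrow> nat \<Rightarrow> bool" where
  "T1 k j = (\<exists>m. (k = 2*m+1 \<and> j = 2*m+3) \<or> (k = 2*m+3 \<and> j = 2*m+1))"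
definition T2 :: "nat \<Rightarrow> nat \<Rightarrow> bool" where
  "T2 k j = (\<exists>m. (k = 2*m \<and> j = 2*m+2) \<or> (k = 2*m+2 \<and> j = 2*m))"

lemma T1_0: "\<not> T1 0 j" unfolding T1_def by presburger
lemma T1_0': "\<not> T1 k 0" unfolding T1_def by presburger
lemma T2_0: "T2 0 j \<longleftrightarrow> j = 2" unfolding T2_def by presburger
lemma T2_0': "T2 k 0 \<longleftrightarrow> k = 2" unfolding T2_def by presburger
lemma T1_S: "T1 (Suc k) (Suc j) \<longleftrightarrow> T2 k j" unfolding T1_def T2_def by presburger
lemma T2_S: "T2 (Suc k) (Suc j) \<longleftrightarrow> T1 k j" unfolding T1_def T2_def by presburger


locale mn = fixes a b :: int assumes ba: "b \<le> a" and b1: "b \<ge> 1" and hyp: "b \<ge> 2 \<or> (b = 1 \<and> a \<ge> 5)"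
begin
lemma a1: "a \<ge> 1" using ba b1 by simp
lemma ab4: "a*b \<ge> 4"
proof (cases "b \<ge> 2")
  case True
  then have "a \<ge> 2" using ba by simp
  then have "a*b \<ge> 2*2" using True by (intro mult_mono) auto
  then show ?thesis by simp
next
  case False then show ?thesis using hyp by auto
qed
sublocale ab a b using a1 b1 ab4 by unfold_locales

lemma qb: "qf a b (beta1 a b n) = (if even n then a else b)" "qf a b (beta2 a b n) = (if even n then b else a)"
  using qf_beta by auto
lemma qb_ge: "1 \<le> qf a b (beta1 a b n)" "1 \<le> qf a b (beta2 a b n)"
  "qf a b (beta1 a b n) \<le> a" "qf a b (beta2 a b n) \<le> a"
  using qb a1 b1 ba by auto

lemma q01: "qf a b (0,1) = a" and q10: "qf a b (1,0) = b" by (simp_all add: qf_def)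
lemma qH1_0: "qf a b (ladd (beta1 a b 0) (beta1 a b n)) = a + qf a b (beta1 a b n) + a*(2*d (Suc n) - b * c n)"
  by (simp add: qf_ladd beta1_def algebra_simps q01 q10)
lemma qH2_0: "qf a b (ladd (beta2 a b 0) (beta2 a b n)) = b + qf a b (beta2 a b n) + b*(2*c (Suc n) - a * d n)"
  by (simp add: qf_ladd beta2_def algebra_simps q01 q10)
lemma qG_0: "qf a b (ladd (beta1 a b 0) (beta2 a b n)) = a + qf a b (beta2 a b n) - a*(b * c (Suc n) - 2*d n)"
  by (simp add: qf_ladd beta1_def beta2_def algebra_simps q01 q10)
lemma qG_0': "qf a b (ladd (beta1 a b n) (beta2 a b 0)) = b + qf a b (beta1 a b n) - b*(a * d (Suc n) - 2*c n)"
  by (simp add: qf_ladd beta1_def beta2_def algebra_simps q01 q10)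

lemma qH1_0_pos: "qf a b (ladd (beta1 a b 0) (beta1 a b n)) > a"
proof -
  have "0 \<le> a*(2*d (Suc n) - b * c n)" using P1[of n] a1 by simp
  then show ?thesis using qH1_0[of n] qb_ge(1)[of n] by linarith
qed
lemma qH2_0_pos: "qf a b (ladd (beta2 a b 0) (beta2 a b n)) > b"
proof -
  have "0 \<le> b*(2*c (Suc n) - a * d n)" using P2[of n] b1 by simp
  then show ?thesis using qH2_0[of n] qb_ge(2)[of n] by linarith
qed

lemma H1S: "ladd (beta1 a b (Suc k)) (beta1 a b (Suc j)) = refl2 a b (ladd (beta2 a b k) (beta2 a b j))"
  by (simp add: refl2_ladd r2b2)
lemma H2S: "ladd (beta2 a b (Suc k)) (beta2 a b (Suc j)) = refl1 a b (ladd (beta1 a b k) (beta1 a b j))"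
  by (simp add: refl1_ladd r1b1)

lemma posH: "\<forall>j. qf a b (ladd (beta1 a b k) (beta1 a b j)) > 0 \<and> qf a b (ladd (beta2 a b k) (beta2 a b j)) > 0"
proof (induction k)
  case 0 then show ?case using qH1_0_pos qH2_0_pos a1 b1 by (metis less_trans zero_less_one less_le_trans)
next
  case (Suc k)
  show ?case
  proof
    fix j show "qf a b (ladd (beta1 a b (Suc k)) (beta1 a b j)) > 0 \<and> qf a b (ladd (beta2 a b (Suc k)) (beta2 a b j)) > 0"
    proof (cases j)
      case 0 then show ?thesis using qH1_0_pos qH2_0_pos a1 b1 ladd_comm
        by (metis less_le_trans zero_less_one less_trans)
    next
      case (Suc j') then show ?thesis using Suc.IH H1S H2S by simp
    qed
  qed
qed


lemma rr1: "refl1 a b v \<in> real_roots a b \<longleftrightarrow> v \<in> real_roots a b" unfolding real_roots_def by (rule orb1)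
lemma rr2: "refl2 a b v \<in> real_roots a b \<longleftrightarrow> v \<in> real_roots a b" unfolding real_roots_def by (rule orb2)

lemma H1_0_notrr: "ladd (beta1 a b 0) (beta1 a b n) \<notin> real_roots a b"
proof
  assume "ladd (beta1 a b 0) (beta1 a b n) \<in> real_roots a b"
  from rr_char[OF this] show False using qH1_0_pos[of n] ba by auto
qed

lemma c3: "c 3 = a*b - 1" by (simp add: numeral_3_eq_3)
lemma c5: "c 5 = (a*b-2)*(a*b-1) - 1"
proof -
  have "c 5 + c 1 = (a*b-2) * c 3" using cid[of 1] by (simp add: numeral_3_eq_3 eval_nat_numeral)
  then show ?thesis using c3 by simp
qed

lemma bigP: "b * (2 + (c 5 - c 3)) > a"
proof -
  have e: "2 + (c 5 - c 3) = (a*b-2)*(a*b-2)" using c3 c5 by (simp add: algebra_simps)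
  show ?thesis
  proof (cases "b = 1")
    case True
    then have a5: "a \<ge> 5" using hyp by auto
    have "(a-2)*(a-2) \<ge> 3*(a-2)" using a5 by (intro mult_right_mono) auto
    then show ?thesis using e True a5 by simp
  next
    case False
    then have b2: "b \<ge> 2" using b1 by simp
    have s: "a*b \<ge> 2*a" using b2 a1 by simp
    obtain X where X: "X = (a*b-2)*(a*b-2)" by blast
    have x1: "X \<ge> 2*(a*b-2)" unfolding X using ab4 by (intro mult_right_mono) auto
    have x2: "b*X \<ge> 2*X" using b2 x1 ab4 by (intro mult_right_mono) auto
    have "a < b*X" using x1 x2 s a1 ba b2 by (smt (verit))
    then show ?thesis unfolding e X .
  qed
qed

lemma H2_0_rr: "ladd (beta2 a b 0) (beta2 a b n) \<in> real_roots a b \<longleftrightarrow> b = 1 \<and> n = 2"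
proof
  assume h: "b = 1 \<and> n = 2"
  have "ladd (beta2 a b 0) (beta2 a b n) = refl1 a b (0,1)"
    using h by (simp add: numeral_2_eq_2 beta2_def ladd_def refl1_def)
  moreover have "(0,1) \<in> real_roots a b" unfolding real_roots_def by (simp add: weyl_orbit.base)
  ultimately show "ladd (beta2 a b 0) (beta2 a b n) \<in> real_roots a b" using rr1 by simp
next
  define H where "H = ladd (beta2 a b 0) (beta2 a b n)"
  define P where "P = 2*c (Suc n) - a * d n"
  assume "ladd (beta2 a b 0) (beta2 a b n) \<in> real_roots a b"
  then have "(b dvd snd H \<and> qf a b H = b) \<or> (a dvd fst H \<and> qf a b H = a)"
    using rr_char H_def by simp
  then have A: "a dvd fst H" "qf a b H = a" using qH2_0_pos[of n] H_def by auto
  have q: "qf a b H = b + qf a b (beta2 a b n) + b * P" using qH2_0 H_def P_def by simp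
  have P0: "P \<ge> 0" using P2[of n] P_def by simp
  show "b = 1 \<and> n = 2"
  proof (cases "even n")
    case False
    then have "qf a b (beta2 a b n) = a" using qb by simp
    moreover have "0 \<le> b*P" using b1 P0 by simp
    ultimately show ?thesis using q A b1 by linarith
  next
    case True
    then have qb': "qf a b (beta2 a b n) = b" using qb by simp
    obtain k where k: "n = 2*k" using True by blast
    consider "k = 0" | "k = 1" | t where "k = Suc (Suc t)" by (metis not0_implies_Suc One_nat_def)
    then show ?thesis
    proof cases
      case 1
      then have "n = 0" using k by simp
      then have "fst H = 2" "P = 2" using H_def P_def by (simp_all add: beta2_def ladd_def)
      then have d2: "a dvd 2" and "a = 4*b" using A q qb' by simp_all
      moreover have "a \<le> 2" using zdvd_imp_le[OF d2] by simp
      ultimately show ?thesis using b1 by linarith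
    next
      case 2
      then have n2: "n = 2" using k by simp
      then have Pv: "P + 2 = a*b" using P_def by (simp add: numeral_2_eq_2)
      have "a = b*(P+2)" using A q qb' by (simp add: algebra_simps)
      then have "a*1 = a*(b*b)" using Pv by (simp add: algebra_simps)
      then have bb: "b*b = 1" using a1 by simp
      have "b*b \<ge> 1*b" using b1 by (intro mult_right_mono) auto
      then have "b = 1" using bb b1 by simp
      then show ?thesis using n2 by simp
    next
      case 3
      define m where "m = 3 + 2*t"
      have nm: "n = Suc m" using k 3 m_def by simp
      have "a * d (Suc m) = c (Suc (Suc m)) + c m" by simp
      then have Pe: "P = c (Suc (Suc m)) - c m" using P_def nm by simp
      have "c (Suc (Suc 3)) - c 3 \<le> c (Suc (Suc (3+2*t))) - c (3+2*t)" by (rule e_ge)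
      then have "c 5 - c 3 \<le> P" using Pe m_def by (simp add: eval_nat_numeral)
      then have "b * (2 + (c 5 - c 3)) \<le> b * (2 + P)" using b1 by simp
      then show ?thesis using bigP A q qb' by (simp add: algebra_simps)
    qed
  qed
qed

lemma Rlem: "\<forall>j. (ladd (beta1 a b k) (beta1 a b j) \<in> real_roots a b \<longleftrightarrow> b = 1 \<and> T1 k j)
              \<and> (ladd (beta2 a b k) (beta2 a b j) \<in> real_roots a b \<longleftrightarrow> b = 1 \<and> T2 k j)"
proof (induction k)
  case 0 then show ?case using H1_0_notrr H2_0_rr T1_0 T2_0 by simp
next
  case (Suc k)
  show ?case
  proof
    fix j show "(ladd (beta1 a b (Suc k)) (beta1 a b j) \<in> real_roots a b \<longleftrightarrow> b = 1 \<and> T1 (Suc k) j)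
              \<and> (ladd (beta2 a b (Suc k)) (beta2 a b j) \<in> real_roots a b \<longleftrightarrow> b = 1 \<and> T2 (Suc k) j)"
    proof (cases j)
      case 0 then show ?thesis using H1_0_notrr H2_0_rr T1_0' T2_0' ladd_comm by metis
    next
      case (Suc j') then show ?thesis using Suc.IH H1S H2S rr1 rr2 T1_S T2_S by simp
    qed
  qed
qed

end


context mn begin

lemma d3: "d 3 = a*b - 1" by (simp add: numeral_3_eq_3)
lemma d4: "d 4 = b*(a*b - 2)" by (simp add: eval_nat_numeral algebra_simps)
lemma c4: "c 4 = a*(a*b - 2)" by (simp add: eval_nat_numeral algebra_simps)
lemma c2: "c 2 = a" by (simp add: eval_nat_numeral)
lemma d2: "d 2 = b" by (simp add: eval_nat_numeral)

lemma F2: assumes "\<not> (b = 1 \<and> n = 0)" shows "b * c (Suc n) - 2 * d n \<ge> 2"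
proof -
  have eq: "b * c (Suc n) - 2 * d n = d (Suc (Suc n)) - d n" by simp
  have "n = 0 \<or> (\<exists>t. n = 1 + 2*t) \<or> (\<exists>t. n = 2 + 2*t)" by presburger
  then consider "n = 0" | t where "n = 1 + 2*t" | t where "n = 2 + 2*t" by blast
  then show ?thesis
  proof cases
    case 1 then show ?thesis using assms b1 by simp
  next
    case 2
    have "d (Suc (Suc 1)) - d 1 \<le> d (Suc (Suc (1+2*t))) - d (1+2*t)" by (rule f_ge)
    then have "a*b - 2 \<le> d (Suc (Suc n)) - d n" using 2 d3 by (simp add: numeral_3_eq_3 mult.commute[of b a])
    then show ?thesis using eq ab4 by linarith
  next
    case 3
    have "d (Suc (Suc 2)) - d 2 \<le> d (Suc (Suc (2+2*t))) - d (2+2*t)" by (rule f_ge)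
    then have h: "b*(a*b-2) - b \<le> d (Suc (Suc n)) - d n" using 3 d4 d2 by (simp add: eval_nat_numeral)
    have "b*(a*b-2) - b \<ge> 2"
    proof (cases "b = 1")
      case True then show ?thesis using hyp by auto
    next
      case False
      then have b2: "b \<ge> 2" using b1 by simp
      have "b*(a*b-3) \<ge> 2*1" using b2 ab4 by (intro mult_mono) auto
      then show ?thesis by (simp add: algebra_simps)
    qed
    then show ?thesis using h eq by linarith
  qed
qed

lemma E2: assumes "odd n" shows "a * d (Suc n) - 2 * c n \<ge> 2"
proof -
  have eq: "a * d (Suc n) - 2 * c n = c (Suc (Suc n)) - c n" by simp
  have "\<exists>t. n = 1 + 2*t" using assms by presburger
  then obtain t where t: "n = 1 + 2*t" by blast
  have "c (Suc (Suc 1)) - c 1 \<le> c (Suc (Suc (1+2*t))) - c (1+2*t)" by (rule e_ge)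
  then have "a*b - 2 \<le> c (Suc (Suc n)) - c n" using t c3 by (simp add: numeral_3_eq_3 mult.commute[of b a])
  then show ?thesis using eq ab4 by linarith
qed

lemma E3: assumes "even n" "n \<ge> 2" shows "b * (a * d (Suc n) - 2 * c n) \<ge> a + b"
proof -
  have eq: "a * d (Suc n) - 2 * c n = c (Suc (Suc n)) - c n" by simp
  have "\<exists>t. n = 2 + 2*t" using assms by presburger
  then obtain t where t: "n = 2 + 2*t" by blast
  have "c (Suc (Suc 2)) - c 2 \<le> c (Suc (Suc (2+2*t))) - c (2+2*t)" by (rule e_ge)
  then have h: "a*(a*b-2) - a \<le> c (Suc (Suc n)) - c n" using t c4 c2 by (simp add: eval_nat_numeral)
  have "b * (a*(a*b-2) - a) \<ge> a + b"
  proof (cases "b = 1")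
    case True
    then have a5: "a \<ge> 5" using hyp by auto
    have h5: "a*a \<ge> 5*a" using a5 by (intro mult_right_mono) auto
    have "b * (a*(a*b-2) - a) = a*a - 3*a" using True by (simp add: algebra_simps)
    then show ?thesis using h5 True a5 by linarith
  next
    case False
    then have b2: "b \<ge> 2" using b1 by simp
    have a2: "a \<ge> 2" using b2 ba by simp
    obtain s where s: "s = a*b" by blast
    have "s \<ge> a + b"
    proof -
      have "(a-1)*(b-1) \<ge> 1*1" using a2 b2 by (intro mult_mono) auto
      then show ?thesis using s by (simp add: algebra_simps)
    qed
    moreover have "s*(s-3) \<ge> s*1" using s ab4 by (intro mult_left_mono) auto
    moreover have "b * (a*(a*b-2) - a) = s*(s-3)" using s by (simp add: algebra_simps)
    ultimately show ?thesis by linarith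
  qed
  moreover have "b * (a*(a*b-2) - a) \<le> b * (c (Suc (Suc n)) - c n)" by (rule mult_left_mono[OF h]) (use b1 in linarith)
  ultimately show ?thesis unfolding eq by linarith
qed

lemma qG0_np: assumes "\<not> (b = 1 \<and> n = 0)" shows "qf a b (ladd (beta1 a b 0) (beta2 a b n)) \<le> 0"
proof -
  have "a * (b * c (Suc n) - 2 * d n) \<ge> a * 2" using F2[OF assms] a1 by (intro mult_left_mono) auto
  then show ?thesis using qG_0[of n] qb_ge(4)[of n] by linarith
qed

lemma qGn0_np: assumes "n \<ge> 1" shows "qf a b (ladd (beta1 a b n) (beta2 a b 0)) \<le> 0"
proof (cases "even n")
  case False
  then have "qf a b (beta1 a b n) = b" using qb by simp
  moreover have "b * (a * d (Suc n) - 2 * c n) \<ge> b * 2" using E2 False b1 by (intro mult_left_mono) auto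
  ultimately show ?thesis using qG_0'[of n] by linarith
next
  case True
  then have "qf a b (beta1 a b n) = a" using qb by simp
  moreover have "n \<ge> 2" using True assms by presburger
  ultimately show ?thesis using qG_0'[of n] E3[OF True] by linarith
qed

lemma Gred2: "ladd (beta1 a b k) (beta2 a b (Suc (Suc j))) = refl1 a b (refl2 a b (ladd (beta1 a b (Suc (Suc k))) (beta2 a b j)))"
  by (simp add: refl1_ladd refl2_ladd r2b1 r2b2 r1b1 r1b2)
lemma Gred1: "ladd (beta1 a b (Suc j)) (beta2 a b 0) = refl2 a b (ladd (beta1 a b 1) (beta2 a b j))"
  by (simp add: refl2_ladd r2b1 r2b2 ladd_comm)

lemma Gq: "\<forall>j. \<not> (b = 1 \<and> k = 0 \<and> j = 0) \<longrightarrow> qf a b (ladd (beta1 a b k) (beta2 a b j)) \<le> 0"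
proof (induction k rule: less_induct)
  case (less k)
  show ?case
  proof (intro allI impI)
    fix j :: nat assume nb: "\<not> (b = 1 \<and> k = 0 \<and> j = 0)"
    have "k = 0 \<or> k = 1 \<or> (\<exists>k'. k = Suc (Suc k'))" by presburger
    then consider "k = 0" | "k = 1" | k' where "k = Suc (Suc k')" by blast
    then show "qf a b (ladd (beta1 a b k) (beta2 a b j)) \<le> 0"
    proof cases
      case 1 then show ?thesis using qG0_np nb by simp
    next
      case 2
      have "qf a b (ladd (beta1 a b (Suc j)) (beta2 a b 0)) \<le> 0" by (rule qGn0_np) simp
      then show ?thesis using 2 Gred1[of j] by simp
    next
      case 3
      have "qf a b (ladd (beta1 a b k') (beta2 a b (Suc (Suc j)))) \<le> 0"
        using less[of k'] 3 by simp
      then show ?thesis using 3 Gred2[of k' j] by simp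
    qed
  qed
qed

end


lemma qf_neg: "qf a b (- fst w, - snd w) = qf a b w" by (simp add: qf_def)

theorem proposition4p6:
  fixes a b :: int
  assumes "a \<ge> b" and "b \<ge> 1"
    and "b \<ge> 2 \<or> (b = 1 \<and> a \<ge> 5)"
  shows
   "(\<forall>i\<in>{1::nat,2}. \<forall>j k.
       ip a b (ladd (beta a b i k) (beta a b i j)) (ladd (beta a b i k) (beta a b i j)) > 0)
  \<and> (b \<ge> 2 \<longrightarrow> (\<forall>i\<in>{1::nat,2}. \<forall>j k. ladd (beta a b i k) (beta a b i j) \<notin> roots a b))
  \<and> (b = 1 \<and> a \<ge> 5 \<longrightarrow>
       (\<forall>k. ladd (beta1 a b (2*k+1)) (beta1 a b (2*k+3)) \<in> real_roots a b
          \<and> ladd (beta2 a b (2*k)) (beta2 a b (2*k+2)) \<in> real_roots a b)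
     \<and> (\<forall>j k. ladd (beta1 a b j) (beta1 a b k) \<in> real_roots a b \<longrightarrow>
          (\<exists>m. (j = 2*m+1 \<and> k = 2*m+3) \<or> (j = 2*m+3 \<and> k = 2*m+1)))
     \<and> (\<forall>j k. ladd (beta2 a b j) (beta2 a b k) \<in> real_roots a b \<longrightarrow>
          (\<exists>m. (j = 2*m \<and> k = 2*m+2) \<or> (j = 2*m+2 \<and> k = 2*m))))
  \<and> (\<forall>j k. ladd (beta1 a b k) (beta2 a b j) \<in> roots a b
       \<and> (\<not> (b = 1 \<and> k = 0 \<and> j = 0) \<longrightarrow>
            ip a b (ladd (beta1 a b k) (beta2 a b j)) (ladd (beta1 a b k) (beta2 a b j)) \<le> 0))"
proof -
  interpret mn a b using assms by unfold_locales auto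
  have bpos: "b > 0" using assms by simp
  have ippos: "ip a b v v > 0" if "qf a b v > 0" for v
    using ip_qf[OF bpos, of a v] that bpos by simp
  have ipnp: "ip a b v v \<le> 0" if "qf a b v \<le> 0" for v
    using ip_qf[OF bpos, of a v] that bpos by (simp add: divide_nonpos_pos)
  have bt: "beta a b 1 = beta1 a b" "beta a b 2 = beta2 a b" by (auto simp: beta_def fun_eq_iff)
  have notroot: "v \<notin> roots a b" if "qf a b v > 0" "v \<notin> real_roots a b" for v
  proof
    assume "v \<in> roots a b"
    then consider "v \<in> real_roots a b" | "v \<in> pos_imag_roots a b"
      | w where "w \<in> pos_imag_roots a b" "v = (- fst w, - snd w)" unfolding roots_def by blast
    then show False
    proof cases
      case 1 then show ?thesis using that by simp
    next
      case 2 then show ?thesis using pi_nonpos[OF a1 b1] that by fastforce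
    next
      case 3 then show ?thesis using pi_nonpos[OF a1 b1, of w] that qf_neg[of a b w] by simp
    qed
  qed
  have P1: "\<forall>i\<in>{1::nat,2}. \<forall>j k.
       ip a b (ladd (beta a b i k) (beta a b i j)) (ladd (beta a b i k) (beta a b i j)) > 0"
    using posH ippos bt by auto
  have P1a: "b \<ge> 2 \<longrightarrow> (\<forall>i\<in>{1::nat,2}. \<forall>j k. ladd (beta a b i k) (beta a b i j) \<notin> roots a b)"
    using posH Rlem notroot bt by auto
  have P1b: "(b = 1 \<and> a \<ge> 5 \<longrightarrow>
       (\<forall>k. ladd (beta1 a b (2*k+1)) (beta1 a b (2*k+3)) \<in> real_roots a b
          \<and> ladd (beta2 a b (2*k)) (beta2 a b (2*k+2)) \<in> real_roots a b)
     \<and> (\<forall>j k. ladd (beta1 a b j) (beta1 a b k) \<in> real_roots a b \<longrightarrow>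
          (\<exists>m. (j = 2*m+1 \<and> k = 2*m+3) \<or> (j = 2*m+3 \<and> k = 2*m+1)))
     \<and> (\<forall>j k. ladd (beta2 a b j) (beta2 a b k) \<in> real_roots a b \<longrightarrow>
          (\<exists>m. (j = 2*m \<and> k = 2*m+2) \<or> (j = 2*m+2 \<and> k = 2*m))))"
  proof (intro impI conjI allI)
    fix k :: nat assume "b = 1 \<and> a \<ge> 5"
    then show "ladd (beta1 a b (2*k+1)) (beta1 a b (2*k+3)) \<in> real_roots a b"
      "ladd (beta2 a b (2*k)) (beta2 a b (2*k+2)) \<in> real_roots a b"
      using Rlem unfolding T1_def T2_def by blast+
  next
    fix j k :: nat assume "ladd (beta1 a b j) (beta1 a b k) \<in> real_roots a b"
    then show "\<exists>m. (j = 2*m+1 \<and> k = 2*m+3) \<or> (j = 2*m+3 \<and> k = 2*m+1)"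
      using Rlem unfolding T1_def by blast
  next
    fix j k :: nat assume "ladd (beta2 a b j) (beta2 a b k) \<in> real_roots a b"
    then show "\<exists>m. (j = 2*m \<and> k = 2*m+2) \<or> (j = 2*m+2 \<and> k = 2*m)"
      using Rlem unfolding T2_def by blast
  qed
  have P2: "\<forall>j k. ladd (beta1 a b k) (beta2 a b j) \<in> roots a b
       \<and> (\<not> (b = 1 \<and> k = 0 \<and> j = 0) \<longrightarrow>
            ip a b (ladd (beta1 a b k) (beta2 a b j)) (ladd (beta1 a b k) (beta2 a b j)) \<le> 0)"
  proof (intro allI conjI impI)
    fix j k :: nat
    show "ladd (beta1 a b k) (beta2 a b j) \<in> roots a b"
    proof (cases "b = 1 \<and> k = 0 \<and> j = 0")
      case True
      then have "ladd (beta1 a b k) (beta2 a b j) = refl2 a b (1,0)"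
        by (simp add: beta1_def beta2_def ladd_def refl2_def)
      moreover have "(1,0) \<in> real_roots a b" unfolding real_roots_def by (simp add: weyl_orbit.base)
      ultimately show ?thesis using rr2 unfolding roots_def by auto
    next
      case False
      then have q: "qf a b (ladd (beta1 a b k) (beta2 a b j)) \<le> 0" using Gq by blast
      have f: "fst (ladd (beta1 a b k) (beta2 a b j)) \<ge> 1"
        using cnn[of k] cpos[of j] by (simp add: beta1_def beta2_def ladd_def)
      have s: "snd (ladd (beta1 a b k) (beta2 a b j)) \<ge> 0"
        using dnn[of "Suc k"] dnn[of j] by (simp add: beta1_def beta2_def ladd_def)
      have "ladd (beta1 a b k) (beta2 a b j) \<in> pos_imag_roots a b"
        by (rule descent'[OF a1 b1]) (use f s q in auto)
      then show ?thesis unfolding roots_def by auto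
    qed
  next
    fix j k :: nat assume "\<not> (b = 1 \<and> k = 0 \<and> j = 0)"
    then show "ip a b (ladd (beta1 a b k) (beta2 a b j)) (ladd (beta1 a b k) (beta2 a b j)) \<le> 0"
      using Gq ipnp by blast
  qed
  show ?thesis using P1 P1a P1b P2 by blast
qed


end
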